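(* Let $E$ be a two-dimensional complex Hilbert space, let $u_E\in E$ satisfy $0<\|u_E\|<1$, and let $T_0\in B(E)_+$ be strictly positive. Define recursively $$T_{n+1}:=T_n^{1/2}\bigl(I_E-|u_E\rangle\langle u_E|\bigr)T_n^{1/2}\qquad(n\ge 0),$$ and let $T_\infty:=\lim_{n\to\infty}T_n$ (the limit exists in norm). Write $e:=u_E/\|u_E\|$, $\tau:=\|u_E\|^2\in(0,1)$, $\rho:=1-\tau\in(0,1)$, let $f$ be a unit vector spanning $e^\perp$, and with respect to $E=\mathbb{C}e\oplus\mathbb{C}f$ write $$T_0=\begin{pmatrix}a_0 & b_0\\ \overline{b_0} & d_0\end{pmatrix}.$$ Then: (1) If $b_0=0$ (equivalently, $e^\perp$ reduces $T_0$), then $T_\infty=0\oplus d_0$, i.e. $T_\infty=d_0|f\rangle\langle f|$. (2) If $b_0\neq 0$, then $T_\infty=0$.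
   Context: For vectors $x,y$, $|x\rangle\langle y|$ denotes the rank-one operator $z\mapsto\langle y,z\rangle x$. $B(E)_+$ denotes the positive operators on $E$, and $T^{1/2}$ the positive square root. The sequence $(T_n)$ is decreasing in the operator order, so it converges. *)

theory Defs
  imports "HOL-Analysis.Analysis"
begin

text \<open>The two-dimensional complex Hilbert space E is modelled as complex^2
  (with its standard inner product, conjugate-linear in the first argument);
  operators on E are 2x2 complex matrices acting by mult. by a vector.\<close>

type_synonym cvec = "complex ^ 2"
type_synonym cop = "complex ^ 2 ^ 2"

definition cinner :: "cvec \<Rightarrow> cvec \<Rightarrow> complex" where
  "cinner x y = (\<Sum>i\<in>UNIV. cnj (x $ i) * y $ i)"

definition ketbra :: "cvec \<Rightarrow> cvec \<Rightarrow> cop" where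
  "ketbra x y = (\<chi> i j. x $ i * cnj (y $ j))"

definition op_scale :: "complex \<Rightarrow> cop \<Rightarrow> cop" where
  "op_scale c A = (\<chi> i j. c * A $ i $ j)"

definition positive_op :: "cop \<Rightarrow> bool" where
  "positive_op A \<longleftrightarrow> (\<forall>x. Im (cinner x (A *v x)) = 0 \<and> 0 \<le> Re (cinner x (A *v x)))"

text \<open>Strictly positive operator: positive and <x, A x> > 0 for x \<noteq> 0
  (in finite dimensions equivalent to positive and invertible).\<close>
definition strictly_positive_op :: "cop \<Rightarrow> bool" where
  "strictly_positive_op A \<longleftrightarrow> positive_op A \<and> (\<forall>x. x \<noteq> 0 \<longrightarrow> 0 < Re (cinner x (A *v x)))"

definition op_sqrt :: "cop \<Rightarrow> cop" where
  "op_sqrt A = (THE P. positive_op P \<and> P ** P = A)"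

end

theory Submission
  imports Defs
begin

lemma vec2_eq: "(x::'a^2) = y \<longleftrightarrow> x$1 = y$1 \<and> x$2 = y$2"
  by (metis (full_types) exhaust_2 vec_eq_iff)

definition mk2 :: "complex \<Rightarrow> complex \<Rightarrow> cvec" where
  "mk2 a b = (\<chi> i. if i = 1 then a else b)"

lemma one_neq_two2[simp]: "(1::2) \<noteq> 2" "(2::2) \<noteq> 1" by auto

lemma mk2_nth[simp]: "mk2 a b $ 1 = a" "mk2 a b $ 2 = b"
  by (auto simp: mk2_def)

lemma cinner2: "cinner x y = cnj (x$1) * y$1 + cnj (x$2) * y$2"
  by (simp add: cinner_def sum_2)

lemma mv2: "((A::cop) *v x) $ i = A$i$1 * x$1 + A$i$2 * x$2"
  by (simp add: matrix_vector_mult_def sum_2)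

lemma mm2: "((A::cop) ** B) $ i $ j = A$i$1 * B$1$j + A$i$2 * B$2$j"
  by (simp add: matrix_matrix_mult_def sum_2)

lemma ketbra_nth[simp]: "ketbra x y $ i $ j = x $ i * cnj (y $ j)"
  by (simp add: ketbra_def)

lemma op_scale_nth[simp]: "op_scale c A $ i $ j = c * A $ i $ j"
  by (simp add: op_scale_def)

lemma mat1_nth: "(mat 1 :: cop) $ i $ j = (if i = j then 1 else 0)"
  by (simp add: mat_def)

lemma norm2_sq: "(norm (x::cvec))^2 = (cmod (x$1))^2 + (cmod (x$2))^2"
  by (simp add: norm_vec_def L2_set_def sum_2)

lemma mat2_eq: "(A::cop) = B \<longleftrightarrow> A$1$1 = B$1$1 \<and> A$1$2 = B$1$2 \<and> A$2$1 = B$2$1 \<and> A$2$2 = B$2$2"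
  by (metis vec2_eq)

definition herm :: "cop \<Rightarrow> bool" where
  "herm A \<longleftrightarrow> (\<forall>i j. A$i$j = cnj (A$j$i))"

lemma real_of_cnj_eq: "z = cnj z \<Longrightarrow> z = of_real (Re z)"
  by (metis Reals_cnj_iff complex_is_Real_iff of_real_Re)

lemma herm_entries: assumes "herm A"
  shows "A$1$1 = of_real (Re (A$1$1))" "A$2$2 = of_real (Re (A$2$2))" "A$2$1 = cnj (A$1$2)"
  using assms unfolding herm_def by (metis real_of_cnj_eq)+

lemma hermI:
  assumes "Im (A$1$1) = 0" "Im (A$2$2) = 0" "A$2$1 = cnj (A$1$2)"
  shows "herm A"
proof -
  have "A$1$1 = cnj (A$1$1)" "A$2$2 = cnj (A$2$2)" "A$1$2 = cnj (A$2$1)" "A$2$1 = cnj (A$1$2)"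
    using assms by (auto simp: complex_eq_iff)
  then show ?thesis unfolding herm_def forall_2 by blast
qed

lemma det_herm: assumes "herm A"
  shows "det A = of_real (Re (A$1$1) * Re (A$2$2) - (cmod (A$1$2))^2)"
proof -
  have "det A = A$1$1 * A$2$2 - A$1$2 * A$2$1" by (rule det_2)
  also have "\<dots> = of_real (Re (A$1$1)) * of_real (Re (A$2$2)) - A$1$2 * cnj (A$1$2)"
    using herm_entries[OF assms] by metis
  also have "\<dots> = of_real (Re (A$1$1) * Re (A$2$2) - (cmod (A$1$2))^2)"
    by (simp add: complex_norm_square[symmetric])
  finally show ?thesis .
qed

lemma qf_im: fixes p s :: real and q x y :: complex
  shows "Im (cnj x * (of_real p * x + q * y) + cnj y * (cnj q * x + of_real s * y)) = 0"
  by (simp add: algebra_simps)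

lemma qf_re: fixes p s :: real and q x y :: complex
  assumes "0 \<le> p" "0 \<le> s" "(cmod q)^2 \<le> p * s"
  shows "0 \<le> Re (cnj x * (of_real p * x + q * y) + cnj y * (cnj q * x + of_real s * y))"
proof (cases "p = 0")
  case True
  then have "cmod q ^2 \<le> 0" using assms by simp
  then have "cmod q ^2 = 0" by (simp add: antisym)
  then have "q = 0" by simp
  then show ?thesis using True assms by (simp add: algebra_simps)
next
  case False
  then have pp: "p > 0" using assms by simp
  have qq: "(Re q)^2 + (Im q)^2 \<le> p * s" using assms by (simp add: cmod_def)
  have "p * Re (cnj x * (of_real p * x + q * y) + cnj y * (cnj q * x + of_real s * y))
     = (Re (p * x + q * y))^2 + (Im (p * x + q*y))^2 + (p * s - (Re q)^2 - (Im q)^2) * ((Re y)^2 + (Im y)^2)"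
    by (simp add: algebra_simps power2_eq_square)
  also have "\<dots> \<ge> 0" using qq by (intro add_nonneg_nonneg mult_nonneg_nonneg) auto
  finally show ?thesis using pp by (simp add: zero_le_mult_iff)
qed

lemma pos_from_coords:
  assumes h: "herm A" and p: "0 \<le> Re (A$1$1)" and s: "0 \<le> Re (A$2$2)"
    and dt: "(cmod (A$1$2))^2 \<le> Re (A$1$1) * Re (A$2$2)"
  shows "positive_op A"
proof -
  note he = herm_entries[OF h]
  have Q: "cinner x (A *v x) = cnj (x$1) * (of_real (Re (A$1$1)) * x$1 + A$1$2 * x$2)
      + cnj (x$2) * (cnj (A$1$2) * x$1 + of_real (Re (A$2$2)) * x$2)" for x
    using he by (simp add: cinner2 mv2)
  show ?thesis unfolding positive_op_def
    using Q qf_im qf_re[OF p s dt] by simp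
qed

lemma pos_herm: assumes "positive_op A" shows "herm A"
proof -
  have P: "Im (cinner x (A *v x)) = 0" for x using assms positive_op_def by blast
  have 1: "Im (A$1$1) = 0" using P[of "mk2 1 0"] by (simp add: cinner2 mv2)
  have 2: "Im (A$2$2) = 0" using P[of "mk2 0 1"] by (simp add: cinner2 mv2)
  have 3: "Im (A$1$2) + Im (A$2$1) = 0" using P[of "mk2 1 1"] 1 2 by (simp add: cinner2 mv2)
  have 4: "Re (A$1$2) = Re (A$2$1)" using P[of "mk2 1 \<i>"] 1 2 by (simp add: cinner2 mv2)
  show ?thesis using 1 2 3 4 by (intro hermI) (auto simp: complex_eq_iff)
qed

lemma pos_coords: assumes "positive_op A"
  shows "0 \<le> Re (A$1$1)" "0 \<le> Re (A$2$2)" "(cmod (A$1$2))^2 \<le> Re (A$1$1) * Re (A$2$2)"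
proof -
  have h: "herm A" by (rule pos_herm[OF assms])
  note he = herm_entries[OF h]
  have P: "0 \<le> Re (cinner x (A *v x))" for x using assms positive_op_def by blast
  define p where "p = Re (A$1$1)"
  define s where "s = Re (A$2$2)"
  define q where "q = A$1$2"
  have Q: "cinner x (A *v x) = cnj (x$1) * (of_real p * x$1 + q * x$2)
      + cnj (x$2) * (cnj q * x$1 + of_real s * x$2)" for x
    using he by (simp add: cinner2 mv2 p_def s_def q_def)
  have p0: "0 \<le> p" using P[of "mk2 1 0"] Q[of "mk2 1 0"] by simp
  have s0: "0 \<le> s" using P[of "mk2 0 1"] Q[of "mk2 0 1"] by simp
  have "(cmod q)^2 \<le> p * s"
  proof (cases "p = 0")
    case False
    then have pp: "p > 0" using p0 by simp
    have "Re (cinner (mk2 (-q) (of_real p)) (A *v (mk2 (-q) (of_real p)))) = p * (p * s - (cmod q)^2)"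
      unfolding Q cmod_power2 by (simp add: algebra_simps power2_eq_square)
    then have "0 \<le> p * (p * s - (cmod q)^2)" using P by metis
    then have "0 \<le> p * s - (cmod q)^2" using pp by (simp add: zero_le_mult_iff)
    then show ?thesis by simp
  next
    case True
    have "q = 0"
    proof (rule ccontr)
      assume qn: "q \<noteq> 0"
      then have cq: "(cmod q)^2 > 0" by simp
      define k where "k = (s + 1) / (cmod q)^2"
      have "Re (cinner (mk2 (- q * of_real k) 1) (A *v (mk2 (- q * of_real k) 1))) = s - 2 * k * (cmod q)^2"
        unfolding Q cmod_power2 using True by (simp add: algebra_simps power2_eq_square)
      also have "k * (cmod q)^2 = s + 1" using cq by (simp add: k_def)
      then have "s - 2 * k * (cmod q)^2 = - s - 2" by simp
      finally have "Re (cinner (mk2 (- q * of_real k) 1) (A *v (mk2 (- q * of_real k) 1))) < 0"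
        using s0 by simp
      then show False using P by (metis not_le)
    qed
    then show ?thesis using True by simp
  qed
  then show "(cmod (A$1$2))^2 \<le> Re (A$1$1) * Re (A$2$2)" by (simp add: p_def s_def q_def)
  show "0 \<le> Re (A$1$1)" "0 \<le> Re (A$2$2)" using p0 s0 by (simp_all add: p_def s_def)
qed

lemma add_nth[simp]: "((A::cop) + B) $ i $ j = A$i$j + B$i$j"
  by simp

lemma sub_nth[simp]: "((A::cop) - B) $ i $ j = A$i$j - B$i$j"
  by simp

lemma real_sq_id1:
  fixes p s m d t :: real
  assumes dd: "d * d = p * s - m" and tt: "t * t = p + s + 2 * d"
  shows "(p + d) * (p + d) + m = p * (t * t)" "(s + d) * (s + d) + m = s * (t * t)"
    "(p + d) + (s + d) = t * t"
  using assms by (simp_all add: algebra_simps)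

lemma sqrt_formula:
  fixes A :: cop
  assumes pos: "positive_op A"
    and tpos: "0 < Re (A$1$1) + Re (A$2$2) + 2 * sqrt (Re (A$1$1) * Re (A$2$2) - (cmod (A$1$2))^2)"
  shows "op_sqrt A = op_scale (of_real (1 / sqrt (Re (A$1$1) + Re (A$2$2) + 2 * sqrt (Re (A$1$1) * Re (A$2$2) - (cmod (A$1$2))^2))))
            (A + op_scale (of_real (sqrt (Re (A$1$1) * Re (A$2$2) - (cmod (A$1$2))^2))) (mat 1))"
    and "positive_op (op_sqrt A)" and "op_sqrt A ** op_sqrt A = A"
proof -
  define p where "p = Re (A$1$1)"
  define s where "s = Re (A$2$2)"
  define q where "q = A$1$2"
  define d where "d = sqrt (p * s - (cmod q)^2)"
  define t where "t = sqrt (p + s + 2 * d)"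
  define F where "F = op_scale (of_real (1 / t)) (A + op_scale (of_real d) (mat 1))"
  have h: "herm A" by (rule pos_herm[OF pos])
  note he = herm_entries[OF h]
  note pc = pos_coords[OF pos]
  have p0: "0 \<le> p" and s0: "0 \<le> s" and qps: "(cmod q)^2 \<le> p * s"
    unfolding p_def s_def q_def by (rule pc(1), rule pc(2), rule pc(3))
  have d0: "0 \<le> d" using qps by (simp add: d_def)
  have "0 \<le> p * s - (cmod q)^2" using qps by simp
  then have dd: "d * d = p * s - (cmod q)^2" by (simp add: d_def)
  have tp: "0 < p + s + 2 * d" using tpos by (simp add: p_def s_def q_def d_def)
  have t0: "0 < t" using tp by (simp add: t_def)
  have tt: "t * t = p + s + 2 * d" using tp by (simp add: t_def)
  have A11: "A$1$1 = of_real p" and A22: "A$2$2 = of_real s" and A21: "A$2$1 = cnj q" and A12: "A$1$2 = q"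
    using he by (simp_all add: p_def s_def q_def)
  have F11: "F$1$1 = of_real ((p + d) / t)" and F22: "F$2$2 = of_real ((s + d) / t)"
    and F12: "F$1$2 = q / of_real t" and F21: "F$2$1 = cnj q / of_real t"
    by (simp_all add: F_def A11 A22 A12 A21 mat1_nth field_simps)
  have posF: "positive_op F"
  proof (rule pos_from_coords)
    show "herm F" by (rule hermI) (simp_all add: F11 F22 F12 F21)
    show "0 \<le> Re (F$1$1)" "0 \<le> Re (F$2$2)" using p0 s0 d0 t0 by (simp_all add: F11 F22)
    have "(cmod q)^2 \<le> (p + d) * (s + d)"
      using qps p0 s0 d0 by (smt (verit) mult_nonneg_nonneg distrib_left distrib_right)
    then have "(cmod q)^2 / (t * t) \<le> ((p + d) * (s + d)) / (t * t)"
      using t0 by (simp add: divide_right_mono)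
    then show "(cmod (F$1$2))^2 \<le> Re (F$1$1) * Re (F$2$2)"
      using t0 by (simp add: F11 F22 F12 norm_divide power_divide power2_eq_square)
  qed
  have ids: "(p + d) * (p + d) + (cmod q)^2 = p * (t * t)" "(s + d) * (s + d) + (cmod q)^2 = s * (t * t)"
      "(p + d) + (s + d) = t * t"
    using real_sq_id1[OF dd tt] by simp_all
  have qq: "q * cnj q = of_real ((cmod q)^2)" using complex_norm_square[of q] by simp
  have sqF: "F ** F = A"
  proof -
    have e11: "(F ** F)$1$1 = A$1$1"
    proof -
      have "(F ** F)$1$1 = of_real ((p + d) * (p + d) / (t * t)) + q * cnj q / of_real (t * t)"
        by (simp add: mm2 F11 F12 F21)
      also have "\<dots> = of_real (((p + d) * (p + d) + (cmod q)^2) / (t * t))"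
        by (simp add: qq add_divide_distrib)
      also have "\<dots> = A$1$1" using ids(1) t0 by (simp add: A11)
      finally show ?thesis .
    qed
    have e22: "(F ** F)$2$2 = A$2$2"
    proof -
      have "(F ** F)$2$2 = q * cnj q / of_real (t * t) + of_real ((s + d) * (s + d) / (t * t))"
        by (simp add: mm2 F22 F12 F21 mult.commute)
      also have "\<dots> = of_real (((s + d) * (s + d) + (cmod q)^2) / (t * t))"
        by (simp add: qq add_divide_distrib)
      also have "\<dots> = A$2$2" using ids(2) t0 by (simp add: A22)
      finally show ?thesis .
    qed
    have e12: "(F ** F)$1$2 = A$1$2"
    proof -
      have "(F ** F)$1$2 = q * of_real (((p + d) + (s + d)) / (t * t))"
        using t0 by (simp add: mm2 F11 F12 F22 field_simps)
      then show ?thesis using ids(3) t0 by (simp add: A12)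
    qed
    have e21: "(F ** F)$2$1 = A$2$1"
    proof -
      have "(F ** F)$2$1 = cnj q * of_real (((p + d) + (s + d)) / (t * t))"
        using t0 by (simp add: mm2 F11 F21 F22 field_simps)
      then show ?thesis using ids(3) t0 by (simp add: A21)
    qed
    show ?thesis using e11 e12 e21 e22 by (simp add: mat2_eq)
  qed
  have uniq: "P = F" if posP: "positive_op P" and PP: "P ** P = A" for P
  proof -
    have hP: "herm P" by (rule pos_herm[OF posP])
    note heP = herm_entries[OF hP]
    note pcP = pos_coords[OF posP]
    define x where "x = Re (P$1$1)"
    define y where "y = Re (P$2$2)"
    define z where "z = P$1$2"
    define m where "m = (cmod z)^2"
    have x0: "0 \<le> x" and y0: "0 \<le> y" and g0: "m \<le> x * y"
      using pcP by (simp_all add: x_def y_def z_def m_def)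
    have P11: "P$1$1 = of_real x" and P22: "P$2$2 = of_real y" and P21: "P$2$1 = cnj z" and P12: "P$1$2 = z"
      using heP by (simp_all add: x_def y_def z_def)
    have zz: "z * cnj z = of_real m" using complex_norm_square[of z] by (simp add: m_def)
    have "A$1$1 = of_real (x * x + m)"
      using PP[symmetric] by (simp add: mm2 P11 P12 P21 zz)
    then have pe: "p = x * x + m" by (simp add: p_def)
    have "A$2$2 = of_real (y * y + m)"
      using PP[symmetric] by (simp add: mm2 P22 P12 P21 zz mult.commute)
    then have se: "s = y * y + m" by (simp add: s_def)
    have qe: "q = of_real (x + y) * z"
      using PP[symmetric] by (simp add: q_def mm2 P11 P12 P22 algebra_simps)
    have "cmod q = (x + y) * cmod z"
      using x0 y0 unfolding qe norm_mult norm_of_real by simp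
    then have "(cmod q)^2 = (x + y) * (x + y) * m"
      by (simp add: m_def power2_eq_square)
    then have "p * s - (cmod q)^2 = (x * y - m) * (x * y - m)"
      by (simp add: pe se algebra_simps)
    then have de: "d = x * y - m" using g0 by (simp add: d_def)
    have "p + s + 2 * d = (x + y) * (x + y)" by (simp add: pe se de algebra_simps)
    then have te: "t = x + y" using x0 y0 by (simp add: t_def)
    have xy0: "0 < x + y" using t0 te by simp
    have f11: "(p + d) / t = x" using xy0 by (simp add: pe de te field_simps)
    have f22: "(s + d) / t = y" using xy0 by (simp add: se de te field_simps)
    have f12: "q / of_real t = z" unfolding qe te using xy0 by (simp del: of_real_add)
    have f21: "cnj q / of_real t = cnj z" using arg_cong[OF f12, of cnj] by simp
    show ?thesis by (simp add: mat2_eq F11 F22 F12 F21 f11 f22 f12 f21 P11 P22 P12 P21)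
  qed
  have "op_sqrt A = F" unfolding op_sqrt_def
  proof (rule the_equality)
    show "positive_op F \<and> F ** F = A" using posF sqF by blast
    show "\<And>P. positive_op P \<and> P ** P = A \<Longrightarrow> P = F" using uniq by blast
  qed
  then show "op_sqrt A = op_scale (of_real (1 / sqrt (Re (A$1$1) + Re (A$2$2) + 2 * sqrt (Re (A$1$1) * Re (A$2$2) - (cmod (A$1$2))^2))))
            (A + op_scale (of_real (sqrt (Re (A$1$1) * Re (A$2$2) - (cmod (A$1$2))^2))) (mat 1))"
    unfolding F_def t_def d_def p_def s_def q_def .
  show "positive_op (op_sqrt A)" "op_sqrt A ** op_sqrt A = A" using posF sqF \<open>op_sqrt A = F\<close> by simp_all
qed

lemma cinner_cnj: "cinner x y = cnj (cinner y x)"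
  by (simp add: cinner2 mult.commute)

lemma herm_obtain:
  assumes "herm A"
  obtains p r q where "A$1$1 = of_real p" "A$2$2 = of_real r" "A$1$2 = q" "A$2$1 = cnj q"
  using herm_entries[OF assms] by metis

lemma herm_cinner: assumes "herm A" shows "cinner x (A *v y) = cnj (cinner y (A *v x))"
proof -
  obtain p r q where h: "A$1$1 = of_real p" "A$2$2 = of_real r" "A$1$2 = q" "A$2$1 = cnj q"
    using herm_obtain[OF assms] by blast
  show ?thesis by (simp add: cinner2 mv2 h algebra_simps)
qed

lemma cinner_ket: "cinner x (ketbra v w *v y) = cinner x v * cinner w y"
  by (simp add: cinner2 mv2 algebra_simps)

lemma cinner_sub_mat: "cinner x (((A::cop) - B) *v y) = cinner x (A *v y) - cinner x (B *v y)"
  by (simp add: cinner2 mv2 algebra_simps)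

lemma cinner_add_mat: "cinner x (((A::cop) + B) *v y) = cinner x (A *v y) + cinner x (B *v y)"
  by (simp add: cinner2 mv2 algebra_simps)

lemma cinner_scale_mat: "cinner x (op_scale c A *v y) = c * cinner x (A *v y)"
  by (simp add: cinner2 mv2 algebra_simps)

lemma cinner_mat1: "cinner x ((mat 1 :: cop) *v y) = cinner x y"
  by simp

lemma cinner_scaleR_right: "cinner x ((A::cop) *v (r *\<^sub>R y)) = of_real r * cinner x (A *v y)"
  unfolding cinner2 mv2 vector_scaleR_component by (simp add: scaleR_conv_of_real algebra_simps)

lemma cinner_scaleR_left: "cinner (r *\<^sub>R x) y = of_real r * cinner x y"
  unfolding cinner2 vector_scaleR_component by (simp add: scaleR_conv_of_real algebra_simps)

lemma cinner_self: "cinner x x = of_real ((norm x)^2)"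
  unfolding cinner2 norm2_sq of_real_add complex_norm_square by (simp add: mult.commute)

lemma step_mat:
  assumes "herm S"
  shows "S ** ((mat 1 :: cop) - ketbra u u) ** S = S ** S - ketbra (S *v u) (S *v u)"
proof -
  obtain p r q where h: "S$1$1 = of_real p" "S$2$2 = of_real r" "S$1$2 = q" "S$2$1 = cnj q"
    using herm_obtain[OF assms] by blast
  show ?thesis by (simp add: mat2_eq mm2 mv2 mat1_nth h algebra_simps)
qed

definition Um :: "cvec \<Rightarrow> cvec \<Rightarrow> cop" where
  "Um e f = (\<chi> i j. if j = 1 then e$i else f$i)"
definition Uh :: "cvec \<Rightarrow> cvec \<Rightarrow> cop" where
  "Uh e f = (\<chi> i j. if i = 1 then cnj (e$j) else cnj (f$j))"

lemma Um_nth[simp]: "Um e f $ i $ 1 = e $ i" "Um e f $ i $ 2 = f $ i"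
  by (simp_all add: Um_def)
lemma Uh_nth[simp]: "Uh e f $ 1 $ j = cnj (e $ j)" "Uh e f $ 2 $ j = cnj (f $ j)"
  by (simp_all add: Uh_def)

lemma ortho_expand:
  fixes A :: cop
  assumes ee: "cinner e e = 1" and ff: "cinner f f = 1" and ef: "cinner e f = 0"
  defines "M \<equiv> (\<chi> i j. if i = 1 then (if j = 1 then cinner e (A *v e) else cinner e (A *v f))
                        else (if j = 1 then cinner f (A *v e) else cinner f (A *v f))) :: cop"
  shows "A = Um e f ** M ** Uh e f"
    and "det A = cinner e (A *v e) * cinner f (A *v f) - cinner e (A *v f) * cinner f (A *v e)"
    and "A$1$1 + A$2$2 = cinner e (A *v e) + cinner f (A *v f)"
proof -
  have fe: "cinner f e = 0" using ef cinner_cnj[of f e] by simp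
  have UhU: "Uh e f ** Um e f = mat 1"
    using ee ff ef fe by (simp add: mat2_eq mm2 mat1_nth cinner2)
  then have UUh: "Um e f ** Uh e f = mat 1" by (simp add: matrix_left_right_inverse)
  have M: "M = Uh e f ** A ** Um e f"
    by (simp add: M_def mat2_eq mm2 cinner2 mv2 algebra_simps)
  have "Um e f ** M ** Uh e f = (Um e f ** Uh e f) ** A ** (Um e f ** Uh e f)"
    by (simp add: M matrix_mul_assoc)
  then show A: "A = Um e f ** M ** Uh e f" by (simp add: UUh)
  have "det A = det (Um e f) * det M * det (Uh e f)" by (subst A) (simp add: det_mul)
  also have "\<dots> = det M * det (Uh e f ** Um e f)" by (simp add: det_mul)
  also have "\<dots> = det M" by (simp add: UhU)
  finally show "det A = cinner e (A *v e) * cinner f (A *v f) - cinner e (A *v f) * cinner f (A *v e)"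
    by (simp add: det_2 M_def)
  have "trace A = trace (Um e f ** (M ** Uh e f))" by (subst A) (simp add: matrix_mul_assoc)
  also have "\<dots> = trace ((M ** Uh e f) ** Um e f)" by (rule trace_mul_sym)
  also have "\<dots> = trace M" by (simp add: UhU matrix_mul_assoc[symmetric])
  finally show "A$1$1 + A$2$2 = cinner e (A *v e) + cinner f (A *v f)"
    by (simp add: trace_def sum_2 M_def)
qed

lemma ortho_entries:
  fixes A :: cop
  assumes ee: "cinner e e = 1" and ff: "cinner f f = 1" and ef: "cinner e f = 0"
  shows "A$i$j = cinner e (A *v e) * (e$i * cnj (e$j)) + cinner e (A *v f) * (e$i * cnj (f$j))
               + cinner f (A *v e) * (f$i * cnj (e$j)) + cinner f (A *v f) * (f$i * cnj (f$j))"
proof -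
  have "A$i$j = (Um e f ** (\<chi> i j. if i = 1 then (if j = 1 then cinner e (A *v e) else cinner e (A *v f))
                        else (if j = 1 then cinner f (A *v e) else cinner f (A *v f))) ** Uh e f) $ i $ j"
    using ortho_expand(1)[OF ee ff ef, of A] by simp
  also have "\<dots> = cinner e (A *v e) * (e$i * cnj (e$j)) + cinner e (A *v f) * (e$i * cnj (f$j))
               + cinner f (A *v e) * (f$i * cnj (e$j)) + cinner f (A *v f) * (f$i * cnj (f$j))"
    by (simp add: mm2 algebra_simps)
  finally show ?thesis .
qed

lemma herm_ef:
  assumes h: "herm A" and ee: "cinner e e = 1" and ff: "cinner f f = 1" and ef: "cinner e f = 0"
  shows "cinner e (A *v e) = of_real (Re (cinner e (A *v e)))"
    and "cinner f (A *v f) = of_real (Re (cinner f (A *v f)))"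
    and "cinner f (A *v e) = cnj (cinner e (A *v f))"
    and "Re (A$1$1) + Re (A$2$2) = Re (cinner e (A *v e)) + Re (cinner f (A *v f))"
    and "Re (A$1$1) * Re (A$2$2) - (cmod (A$1$2))^2
         = Re (cinner e (A *v e)) * Re (cinner f (A *v f)) - (cmod (cinner e (A *v f)))^2"
proof -
  show 1: "cinner e (A *v e) = of_real (Re (cinner e (A *v e)))"
    by (rule real_of_cnj_eq) (rule herm_cinner[OF h])
  show 2: "cinner f (A *v f) = of_real (Re (cinner f (A *v f)))"
    by (rule real_of_cnj_eq) (rule herm_cinner[OF h])
  show 3: "cinner f (A *v e) = cnj (cinner e (A *v f))" by (rule herm_cinner[OF h])
  show "Re (A$1$1) + Re (A$2$2) = Re (cinner e (A *v e)) + Re (cinner f (A *v f))"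
    using arg_cong[OF ortho_expand(3)[OF ee ff ef, of A], of Re] by simp
  have "of_real (Re (A$1$1) * Re (A$2$2) - (cmod (A$1$2))^2) = det A" by (rule det_herm[OF h, symmetric])
  also have "\<dots> = cinner e (A *v e) * cinner f (A *v f) - cinner e (A *v f) * cinner f (A *v e)"
    by (rule ortho_expand(2)[OF ee ff ef])
  also have "\<dots> = of_real (Re (cinner e (A *v e)) * Re (cinner f (A *v f)) - (cmod (cinner e (A *v f)))^2)"
    apply (subst 1, subst 2, subst 3)
    using complex_norm_square[of "cinner e (A *v f)"] by simp
  finally show "Re (A$1$1) * Re (A$2$2) - (cmod (A$1$2))^2
         = Re (cinner e (A *v e)) * Re (cinner f (A *v f)) - (cmod (cinner e (A *v f)))^2"
    using of_real_eq_iff by blast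
qed

lemma pos_from_trdet:
  assumes h: "herm A" and tr: "0 \<le> Re (A$1$1) + Re (A$2$2)"
    and dt: "(cmod (A$1$2))^2 \<le> Re (A$1$1) * Re (A$2$2)"
  shows "positive_op A"
proof -
  have pq: "0 \<le> Re (A$1$1) * Re (A$2$2)" using dt by (meson order_trans zero_le_power2)
  have "0 \<le> Re (A$1$1) \<and> 0 \<le> Re (A$2$2)"
  proof (rule ccontr)
    assume "\<not> (0 \<le> Re (A$1$1) \<and> 0 \<le> Re (A$2$2))"
    then show False using pq tr by (auto simp: zero_le_mult_iff)
  qed
  then show ?thesis using pos_from_coords[OF h _ _ dt] by blast
qed

lemma step_poly:
  fixes a d B t dl s :: real
  assumes B: "B = a * d - dl * dl" and s: "s = a + d + 2 * dl"
  shows "(a * s - t * (a + dl)^2) * (d * s - t * B) - (s - t * (a + dl))^2 * B = (1 - t) * (a * d - B) * s^2"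
  unfolding B s by (simp add: power2_eq_square algebra_simps)

lemma step_alg:
  fixes a d B t dl s :: real
  assumes B: "B = a * d - dl * dl" and s: "s = a + d + 2 * dl" and sp: "s > 0"
  shows "(a - t * (a + dl)^2 / s) * (d - t * B / s) - ((1 - t * (a + dl) / s)^2) * B = (1 - t) * (a * d - B)"
proof -
  have "(a - t * (a + dl)^2 / s) * (d - t * B / s) - ((1 - t * (a + dl) / s)^2) * B
      = ((a * s - t * (a + dl)^2) * (d * s - t * B) - (s - t * (a + dl))^2 * B) / s^2"
    using sp by (simp add: field_simps power2_eq_square)
  also have "\<dots> = (1 - t) * (a * d - B)" using step_poly[OF B s] sp by simp
  finally show ?thesis .
qed

lemma key_part:
  fixes a d bb dl s :: "nat \<Rightarrow> real" and t c sg K0 :: real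
  assumes t0: "0 < t" and t1: "t \<le> 1" and c0: "0 < c" and sg0: "0 < sg" and sg1: "sg < 1"
    and K0: "0 \<le> K0"
    and a0: "\<And>n. 0 \<le> a n" and bbp: "\<And>n. 0 < bb n" and dc: "\<And>n. c \<le> d n"
    and sd: "\<And>n. d n \<le> s n"
    and dl: "\<And>n. dl n = K0 * sg ^ n"
    and bbsq: "\<And>n. (bb n)^2 = a n * d n - (dl n)^2"
    and rb: "\<And>n. bb (Suc n) = (1 - t * (a n + dl n) / s n) * bb n"
    and rd: "\<And>n. d (Suc n) = d n - t * (bb n)^2 / s n"
    and alim: "a \<longlonglongrightarrow> 0" and blim: "bb \<longlonglongrightarrow> 0"
  shows False
proof -
  define x where "x n = t * (a n + dl n) / s n" for n
  have dl0: "0 \<le> dl n" for n using K0 sg0 by (simp add: dl)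
  have sp: "0 < s n" for n using c0 dc[of n] sd[of n] by linarith
  have sc: "c \<le> s n" for n using dc[of n] sd[of n] by linarith
  have xle: "x n \<le> (a n + dl n) / c" for n
  proof -
    have "x n \<le> (a n + dl n) / s n"
      unfolding x_def using t1 t0 a0[of n] dl0[of n] sp[of n]
      by (intro divide_right_mono mult_left_le_one_le) auto
    also have "\<dots> \<le> (a n + dl n) / c"
      using a0[of n] dl0[of n] sc[of n] c0 by (simp add: frac_le)
    finally show ?thesis .
  qed
  have dllim: "dl \<longlonglongrightarrow> 0"
    unfolding dl[abs_def] using sg0 sg1 by (auto intro!: tendsto_mult_right_zero LIMSEQ_power_zero)
  have "(\<lambda>n. (a n + dl n) / c) \<longlonglongrightarrow> (0 + 0) / c"
    using c0 by (intro tendsto_intros alim dllim) auto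
  then have "eventually (\<lambda>n. (a n + dl n) / c < 1 - sg) sequentially"
    using sg1 by (intro order_tendstoD(2)) auto
  then obtain N where N: "\<And>n. n \<ge> N \<Longrightarrow> (a n + dl n) / c < 1 - sg"
    by (auto simp: eventually_sequentially)
  have xs: "sg < 1 - x n" if "n \<ge> N" for n using N[OF that] xle[of n] by linarith
  have bbN: "bb N * sg ^ m \<le> bb (N + m)" for m
  proof (induction m)
    case 0 then show ?case by simp
  next
    case (Suc m)
    have "bb N * sg ^ Suc m = sg * (bb N * sg ^ m)" by simp
    also have "\<dots> \<le> sg * bb (N + m)" using Suc sg0 by simp
    also have "\<dots> \<le> (1 - x (N + m)) * bb (N + m)"
      using xs[of "N + m"] bbp[of "N + m"] by (intro mult_right_mono) auto
    also have "\<dots> = bb (N + Suc m)" by (simp add: rb x_def)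
    finally show ?case .
  qed
  have drec: "d (Suc n) = d n * (1 - x n) + t * dl n * (d n + dl n) / s n" for n
  proof -
    have "d (Suc n) = d n - t * (a n * d n - (dl n)^2) / s n" by (simp add: rd bbsq)
    also have "\<dots> = d n * (1 - x n) + t * dl n * (d n + dl n) / s n"
      using sp[of n] by (simp add: x_def field_simps power2_eq_square)
    finally show ?thesis .
  qed
  define R where "R m = d (N + m) / bb (N + m)" for m
  define Kg where "Kg = t * K0 * sg ^ N / (c * sg) + t * K0^2 * sg ^ (2 * N) / (c * sg * bb N)"
  have Kg0: "0 \<le> Kg" unfolding Kg_def using t0 K0 c0 sg0 bbp[of N] by simp
  have Rstep: "R (Suc m) \<le> R m * (1 + Kg * sg ^ m) + Kg * sg ^ m" for m
  proof -
    define n where "n = N + m"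
    have nN: "n \<ge> N" by (simp add: n_def)
    have bn: "0 < bb n" by (rule bbp)
    have x1: "0 < 1 - x n" using xs[OF nN] sg0 by linarith
    have dn: "0 \<le> d n" using dc[of n] c0 by linarith
    have A1: "t * dl n * (d n + dl n) / s n \<le> t * dl n * (d n + dl n) / c"
      using t0 dl0[of n] dn sc[of n] c0 by (intro divide_left_mono mult_nonneg_nonneg) auto
    have "R (Suc m) = d (Suc n) / ((1 - x n) * bb n)"
      by (simp add: R_def n_def rb x_def)
    also have "\<dots> \<le> (d n * (1 - x n) + t * dl n * (d n + dl n) / c) / ((1 - x n) * bb n)"
      unfolding drec using A1 x1 bn by (intro divide_right_mono) auto
    also have "\<dots> = R m + t * dl n * (d n + dl n) / (c * (1 - x n) * bb n)"
      using x1 bn c0 by (simp add: R_def n_def field_simps)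
    also have "\<dots> \<le> R m + t * dl n * (d n + dl n) / (c * sg * bb n)"
      using x1 bn c0 xs[OF nN] sg0 t0 dl0[of n] dn
      by (intro add_left_mono divide_left_mono mult_right_mono mult_left_mono mult_pos_pos mult_nonneg_nonneg) auto
    also have "\<dots> = R m * (t * dl n / (c * sg)) + R m + t * (dl n)^2 / (c * sg * bb n)"
      using bn c0 sg0 by (simp add: R_def n_def field_simps power2_eq_square)
    also have "\<dots> \<le> R m * (Kg * sg ^ m) + R m + Kg * sg ^ m"
    proof -
      have Rm0: "0 \<le> R m" using dn bn by (simp add: R_def n_def)
      have e1: "t * dl n / (c * sg) = t * K0 * sg ^ N / (c * sg) * sg ^ m"
        by (simp add: dl n_def power_add)
      have e1': "t * dl n / (c * sg) \<le> Kg * sg ^ m"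
        unfolding e1 Kg_def using t0 K0 c0 sg0 bbp[of N]
        by (intro mult_right_mono) auto
      have "(dl n)^2 / bb n \<le> (dl n)^2 / (bb N * sg ^ m)"
        using bbN[of m] bbp[of N] bn sg0 by (intro divide_left_mono) (auto simp: n_def)
      also have "\<dots> = (K0 * sg ^ n)^2 / (bb N * sg ^ m)" by (simp add: dl)
      also have "\<dots> = K0^2 * sg ^ (2 * N) / bb N * sg ^ m"
      proof -
        have "sg ^ (2 * N) = sg ^ N * sg ^ N" by (simp add: mult_2 power_add)
        then show ?thesis
          using sg0 bbp[of N] by (simp add: n_def power_add power_mult_distrib field_simps power2_eq_square)
      qed
      finally have e2: "(dl n)^2 / bb n \<le> K0^2 * sg ^ (2 * N) / bb N * sg ^ m" .
      have "t * (dl n)^2 / (c * sg * bb n) = (t / (c * sg)) * ((dl n)^2 / bb n)"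
        by (simp add: field_simps)
      also have "\<dots> \<le> (t / (c * sg)) * (K0^2 * sg ^ (2 * N) / bb N * sg ^ m)"
        using e2 t0 c0 sg0 by (intro mult_left_mono) auto
      also have "\<dots> = t * K0^2 * sg ^ (2 * N) / (c * sg * bb N) * sg ^ m"
        by (simp add: field_simps)
      also have "\<dots> \<le> Kg * sg ^ m"
        unfolding Kg_def using t0 K0 c0 sg0 bbp[of N]
        by (intro mult_right_mono) auto
      finally have e2': "t * (dl n)^2 / (c * sg * bb n) \<le> Kg * sg ^ m" .
      show ?thesis using e1' e2' Rm0 by (intro add_mono mult_left_mono) auto
    qed
    also have "\<dots> = R m * (1 + Kg * sg ^ m) + Kg * sg ^ m" by (simp add: algebra_simps)
    finally show ?thesis .
  qed
  have R0: "0 \<le> R m" for m using dc[of "N+m"] c0 bbp[of "N+m"] by (simp add: R_def)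
  have Rexp: "1 + R m \<le> (1 + R 0) * exp (Kg * (1 - sg ^ m) / (1 - sg))" for m
  proof (induction m)
    case 0 then show ?case by simp
  next
    case (Suc m)
    have "1 + R (Suc m) \<le> (1 + R m) * (1 + Kg * sg ^ m)"
      using Rstep[of m] by (simp add: algebra_simps)
    also have "\<dots> \<le> (1 + R m) * exp (Kg * sg ^ m)"
      using R0[of m] by (intro mult_left_mono) (auto simp: exp_ge_add_one_self add.commute)
    also have "\<dots> \<le> (1 + R 0) * exp (Kg * (1 - sg ^ m) / (1 - sg)) * exp (Kg * sg ^ m)"
      using Suc by (intro mult_right_mono) auto
    also have "\<dots> = (1 + R 0) * exp (Kg * (1 - sg ^ Suc m) / (1 - sg))"
    proof -
      have "Kg * (1 - sg ^ m) / (1 - sg) + Kg * sg ^ m = Kg * (1 - sg ^ Suc m) / (1 - sg)"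
        using sg1 by (simp add: field_simps)
      then show ?thesis by (simp add: mult.assoc exp_add[symmetric])
    qed
    finally show ?case .
  qed
  define M where "M = (1 + R 0) * exp (Kg / (1 - sg))"
  have RM: "R m \<le> M" for m
  proof -
    have "Kg * (1 - sg ^ m) / (1 - sg) \<le> Kg / (1 - sg)"
      using Kg0 sg0 sg1 by (intro divide_right_mono) (auto simp: mult_left_le)
    then have "exp (Kg * (1 - sg ^ m) / (1 - sg)) \<le> exp (Kg / (1 - sg))" by simp
    then have "(1 + R 0) * exp (Kg * (1 - sg ^ m) / (1 - sg)) \<le> M"
      unfolding M_def using R0[of 0] by (intro mult_left_mono) auto
    then show ?thesis using Rexp[of m] by linarith
  qed
  have dM: "d (N + m) \<le> M * bb (N + m)" for m
    using RM[of m] bbp[of "N+m"] by (simp add: R_def field_simps)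
  have "(\<lambda>m. M * bb (m + N)) \<longlonglongrightarrow> M * 0"
    by (intro tendsto_intros LIMSEQ_ignore_initial_segment blim)
  then have "eventually (\<lambda>m. M * bb (m + N) < c) sequentially"
    using c0 by (intro order_tendstoD(2)) auto
  then obtain m where "M * bb (m + N) < c" by (auto simp: eventually_sequentially)
  then show False using dM[of m] dc[of "N + m"] by (simp add: add.commute)
qed

lemma scalar_main:
  fixes a d bb dl s :: "nat \<Rightarrow> real" and t :: real
  assumes t0: "0 < t" and t1: "t < 1"
    and a0: "\<And>n. 0 \<le> a n" and d0: "\<And>n. 0 \<le> d n" and bb0: "\<And>n. 0 \<le> bb n"
    and Dpos: "0 < a 0 * d 0 - (bb 0)^2"
    and dl: "\<And>n. dl n = sqrt (a n * d n - (bb n)^2)"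
    and s: "\<And>n. s n = a n + d n + 2 * dl n"
    and ra: "\<And>n. a (Suc n) = a n - t * (a n + dl n)^2 / s n"
    and rb: "\<And>n. bb (Suc n) = (1 - t * (a n + dl n) / s n) * bb n"
    and rd: "\<And>n. d (Suc n) = d n - t * (bb n)^2 / s n"
  shows "a \<longlonglongrightarrow> 0" "bb \<longlonglongrightarrow> 0" "bb 0 = 0 \<Longrightarrow> d n = d 0" "bb 0 \<noteq> 0 \<Longrightarrow> d \<longlonglongrightarrow> 0"
proof -
  define D where "D n = a n * d n - (bb n)^2" for n
  have Dn: "D n = (1 - t) ^ n * D 0" for n
  proof (induction n)
    case 0 then show ?case by simp
  next
    case (Suc n)
    have Dp: "0 < D n" using Suc Dpos t1 by (simp add: D_def)
    have dd: "dl n * dl n = a n * d n - (bb n)^2" using Dp by (simp add: dl D_def)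
    have dlp: "0 < dl n" using Dp by (simp add: dl D_def)
    have sp: "0 < s n" using dlp a0[of n] d0[of n] by (simp add: s)
    have B: "(bb n)^2 = a n * d n - dl n * dl n" using dd by simp
    have "D (Suc n) = (a n - t * (a n + dl n)^2 / s n) * (d n - t * (bb n)^2 / s n)
        - ((1 - t * (a n + dl n) / s n)^2) * (bb n)^2"
      by (simp add: D_def ra rb rd power_mult_distrib)
    also have "\<dots> = (1 - t) * D n"
      using step_alg[OF B s sp, of t] by (simp add: D_def)
    finally show ?case using Suc by simp
  qed
  have Dp: "0 < D n" for n using Dn[of n] Dpos t1 by (simp add: D_def)
  have dlp: "0 < dl n" for n using Dp[of n] by (simp add: dl D_def)
  have dd: "(dl n)^2 = a n * d n - (bb n)^2" for n using Dp[of n] by (simp add: dl D_def)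
  have sp: "0 < s n" for n using dlp[of n] a0[of n] d0[of n] by (simp add: s)
  have adl: "a n + dl n \<le> s n" for n using d0[of n] dlp[of n] by (simp add: s)
  have x0: "0 \<le> t * (a n + dl n) / s n" for n using t0 a0[of n] dlp[of n] sp[of n] by simp
  have xt: "t * (a n + dl n) / s n \<le> t" for n
  proof -
    have "(a n + dl n) / s n \<le> 1" using adl[of n] sp[of n] by simp
    then have "t * ((a n + dl n) / s n) \<le> t" using t0 by (intro mult_left_le) auto
    then show ?thesis by simp
  qed
  define sg where "sg = sqrt (1 - t)"
  have sg0: "0 < sg" and sg1: "sg < 1" using t0 t1 by (simp_all add: sg_def)
  have dlf: "dl n = sqrt (D 0) * sg ^ n" for n
  proof -
    have "dl n = sqrt ((1 - t) ^ n * D 0)" using Dn[of n] by (simp add: dl D_def)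
    also have "\<dots> = sqrt (D 0) * sg ^ n" by (simp add: sg_def real_sqrt_mult real_sqrt_power)
    finally show ?thesis .
  qed
  have adec: "a (Suc n) \<le> a n" for n using t0 sp[of n] by (simp add: ra)
  have ddec: "d (Suc n) \<le> d n" for n using t0 sp[of n] by (simp add: rd)
  have dldec: "dl (Suc n) \<le> dl n" for n
    using sg0 sg1 Dp[of 0] by (simp add: dlf mult_left_le_one_le)
  have sdec: "s (Suc n) \<le> s n" for n using adec[of n] ddec[of n] dldec[of n] by (simp add: s)
  have sle: "s n \<le> s 0" for n
    using decseqD[OF decseq_SucI[of s, OF sdec], of 0 n] by simp
  have dle: "d n \<le> d 0" for n
    using decseqD[OF decseq_SucI[of d, OF ddec], of 0 n] by simp
  have astep: "t * (a n)^2 / s 0 \<le> a n - a (Suc n)" for n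
  proof -
    have "t * (a n)^2 / s 0 \<le> t * (a n)^2 / s n"
      using sp[of n] sle[of n] t0 by (intro divide_left_mono) auto
    also have "\<dots> \<le> t * (a n + dl n)^2 / s n"
      using a0[of n] dlp[of n] t0 sp[of n]
      by (intro divide_right_mono mult_left_mono power_mono) auto
    also have "\<dots> = a n - a (Suc n)" by (simp add: ra)
    finally show ?thesis .
  qed
  have psum: "(\<Sum>k<n. t * (a k)^2 / s 0) \<le> a 0 - a n" for n
  proof (induction n)
    case 0 then show ?case by simp
  next
    case (Suc n) then show ?case using astep[of n] by simp
  qed
  have psum2: "(\<Sum>k<n. (a k)^2) \<le> a 0 * s 0 / t" for n
  proof -
    have "(\<Sum>k<n. t * (a k)^2 / s 0) = t / s 0 * (\<Sum>k<n. (a k)^2)"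
      by (simp add: sum_distrib_left)
    then have "t / s 0 * (\<Sum>k<n. (a k)^2) \<le> a 0" using psum[of n] a0[of n] by simp
    then show ?thesis using t0 sp[of 0] by (simp add: field_simps)
  qed
  have "summable (\<lambda>k. (a k)^2)"
    by (rule summableI_nonneg_bounded[OF _ psum2]) simp
  then have "(\<lambda>k. (a k)^2) \<longlonglongrightarrow> 0" by (rule summable_LIMSEQ_zero)
  then have "(\<lambda>k. sqrt ((a k)^2)) \<longlonglongrightarrow> sqrt 0" by (rule tendsto_real_sqrt)
  then show alim: "a \<longlonglongrightarrow> 0" using a0 by simp
  have bble: "bb n \<le> sqrt (d 0 * a n)" for n
  proof (rule real_le_rsqrt)
    have "(bb n)^2 \<le> a n * d n" using Dp[of n] by (simp add: D_def)
    also have "\<dots> \<le> d 0 * a n" using a0[of n] dle[of n] by (simp add: mult_left_mono mult.commute)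
    finally show "(bb n)^2 \<le> d 0 * a n" .
  qed
  have "(\<lambda>n. sqrt (d 0 * a n)) \<longlonglongrightarrow> sqrt (d 0 * 0)"
    by (intro tendsto_intros alim)
  then have g: "(\<lambda>n. sqrt (d 0 * a n)) \<longlonglongrightarrow> 0" by simp
  show blim: "bb \<longlonglongrightarrow> 0"
    by (rule tendsto_sandwich[OF _ _ tendsto_const g]) (auto simp: bb0 bble)
  show "d n = d 0" if b00: "bb 0 = 0"
  proof -
    have bz: "bb k = 0" for k by (induction k) (simp_all add: b00 rb)
    show ?thesis by (induction n) (simp_all add: rd bz)
  qed
  show "d \<longlonglongrightarrow> 0" if b00: "bb 0 \<noteq> 0"
  proof -
    have bbp: "0 < bb n" for n
    proof (induction n)
      case 0 then show ?case using b00 bb0[of 0] by simp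
    next
      case (Suc n)
      have "0 < 1 - t * (a n + dl n) / s n" using xt[of n] t1 by linarith
      then show ?case using Suc by (simp add: rb)
    qed
    obtain c where dc: "d \<longlonglongrightarrow> c" "\<forall>i. c \<le> d i"
      using decseq_convergent[OF decseq_SucI[of d, OF ddec], of 0] d0 by blast
    have c0: "0 \<le> c" by (rule LIMSEQ_le_const[OF dc(1)]) (simp add: d0)
    show ?thesis
    proof (cases "c = 0")
      case True then show ?thesis using dc by simp
    next
      case False
      then have cp: "0 < c" using c0 by simp
      have False
      proof (rule key_part[of t c sg "sqrt (D 0)" a bb d s dl])
        show "0 < t" "t \<le> 1" "0 < c" "0 < sg" "sg < 1" using t0 t1 cp sg0 sg1 by auto
        show "0 \<le> sqrt (D 0)" using Dp[of 0] by simp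
        show "\<And>n. 0 \<le> a n" by (rule a0)
        show "\<And>n. 0 < bb n" by (rule bbp)
        show "\<And>n. c \<le> d n" using dc(2) by blast
        show "\<And>n. d n \<le> s n" using a0 dlp by (simp add: s add_increasing less_imp_le)
        show "\<And>n. dl n = sqrt (D 0) * sg ^ n" by (rule dlf)
        show "\<And>n. (bb n)^2 = a n * d n - (dl n)^2" using dd by simp
        show "\<And>n. bb (Suc n) = (1 - t * (a n + dl n) / s n) * bb n" by (rule rb)
        show "\<And>n. d (Suc n) = d n - t * (bb n)^2 / s n" by (rule rd)
        show "a \<longlonglongrightarrow> 0" by (rule alim)
        show "bb \<longlonglongrightarrow> 0" by (rule blim)
      qed
      then show ?thesis ..
    qed
  qed
qed

lemma strict_det:
  assumes sp: "strictly_positive_op A"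
  shows "0 < Re (A$1$1) * Re (A$2$2) - (cmod (A$1$2))^2"
proof -
  have pos: "positive_op A" using sp strictly_positive_op_def by blast
  have P: "\<And>x. x \<noteq> 0 \<Longrightarrow> 0 < Re (cinner x (A *v x))" using sp strictly_positive_op_def by blast
  have h: "herm A" by (rule pos_herm[OF pos])
  obtain p r q where he: "A$1$1 = of_real p" "A$2$2 = of_real r" "A$1$2 = q" "A$2$1 = cnj q"
    using herm_obtain[OF h] by blast
  have Q: "cinner x (A *v x) = cnj (x$1) * (of_real p * x$1 + q * x$2)
      + cnj (x$2) * (cnj q * x$1 + of_real r * x$2)" for x
    by (simp add: cinner2 mv2 he)
  have n10: "mk2 1 0 \<noteq> 0" by (metis mk2_nth(1) one_neq_zero zero_index)
  have pp: "0 < p" using P[OF n10] Q[of "mk2 1 0"] by simp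
  have nz: "mk2 (-q) (of_real p) \<noteq> 0" using pp by (metis mk2_nth(2) of_real_eq_0_iff less_irrefl zero_index)
  have "Re (cinner (mk2 (-q) (of_real p)) (A *v (mk2 (-q) (of_real p)))) = p * (p * r - (cmod q)^2)"
    unfolding Q cmod_power2 by (simp add: algebra_simps power2_eq_square)
  then have "0 < p * (p * r - (cmod q)^2)" using P[OF nz] by simp
  then have "0 < p * r - (cmod q)^2" using pp by (simp add: zero_less_mult_iff)
  then show ?thesis by (simp add: he)
qed

lemma mstep:
  fixes A :: cop and e f u :: cvec and nu :: real
  assumes ee: "cinner e e = 1" and ff: "cinner f f = 1" and ef: "cinner e f = 0"
    and u: "u = nu *\<^sub>R e" and nu0: "0 < nu" and nu1: "nu < 1"
    and pos: "positive_op A"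
    and Dp: "0 < Re (cinner e (A *v e)) * Re (cinner f (A *v f)) - (cmod (cinner e (A *v f)))^2"
  defines "a \<equiv> Re (cinner e (A *v e))" and "b \<equiv> cinner e (A *v f)" and "d \<equiv> Re (cinner f (A *v f))"
  defines "dl \<equiv> sqrt (a * d - (cmod b)^2)"
  defines "s \<equiv> a + d + 2 * dl"
  defines "A' \<equiv> op_sqrt A ** ((mat 1 :: cop) - ketbra u u) ** op_sqrt A"
  shows "Re (cinner e (A' *v e)) = a - nu^2 * (a + dl)^2 / s"
    and "cinner e (A' *v f) = of_real (1 - nu^2 * (a + dl) / s) * b"
    and "cmod (cinner e (A' *v f)) = (1 - nu^2 * (a + dl) / s) * cmod b"
    and "Re (cinner f (A' *v f)) = d - nu^2 * (cmod b)^2 / s"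
    and "positive_op A'"
    and "Re (cinner e (A' *v e)) * Re (cinner f (A' *v f)) - (cmod (cinner e (A' *v f)))^2
          = (1 - nu^2) * (a * d - (cmod b)^2)"
proof -
  have h: "herm A" by (rule pos_herm[OF pos])
  note hf = herm_ef[OF h ee ff ef]
  have Ae: "cinner e (A *v e) = of_real a" using hf(1) by (simp add: a_def)
  have Af: "cinner f (A *v f) = of_real d" using hf(2) by (simp add: d_def)
  have Afe: "cinner f (A *v e) = cnj b" using hf(3) by (simp add: b_def)
  have tr: "Re (A$1$1) + Re (A$2$2) = a + d" using hf(4) by (simp add: a_def d_def)
  have dt: "Re (A$1$1) * Re (A$2$2) - (cmod (A$1$2))^2 = a * d - (cmod b)^2"
    using hf(5) by (simp add: a_def d_def b_def)
  have Dp': "0 < a * d - (cmod b)^2" using Dp by (simp add: a_def d_def b_def)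
  have a0: "0 \<le> a" using pos unfolding positive_op_def a_def by blast
  have d0: "0 \<le> d" using pos unfolding positive_op_def d_def by blast
  have dlp: "0 < dl" using Dp' by (simp add: dl_def)
  have dd: "dl * dl = a * d - (cmod b)^2" using Dp' by (simp add: dl_def)
  have sp: "0 < s" using a0 d0 dlp by (simp add: s_def)
  define t where "t = sqrt s"
  have t0: "0 < t" using sp by (simp add: t_def)
  have tt: "t * t = s" using sp by (simp add: t_def)
  have tpos: "0 < Re (A$1$1) + Re (A$2$2) + 2 * sqrt (Re (A$1$1) * Re (A$2$2) - (cmod (A$1$2))^2)"
    unfolding tr dt using sp by (simp add: s_def dl_def)
  note sf = sqrt_formula[OF pos tpos]
  define S where "S = op_sqrt A"
  have Sdef: "S = op_scale (of_real (1 / t)) (A + op_scale (of_real dl) (mat 1))"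
    using sf(1) unfolding tr dt by (simp add: S_def t_def s_def dl_def)
  have hS: "herm S" using sf(2) pos_herm by (simp add: S_def)
  have SS: "S ** S = A" using sf(3) by (simp add: S_def)
  define v where "v = S *v u"
  have A'eq: "A' = A - ketbra v v"
    unfolding A'_def S_def[symmetric] step_mat[OF hS] SS v_def ..
  have cin: "cinner x (A' *v y) = cinner x (A *v y) - cinner x v * cinner v y" for x y
    by (simp add: A'eq cinner_sub_mat cinner_ket)
  have cxv: "cinner x v = of_real (nu / t) * (cinner x (A *v e) + of_real dl * cinner x e)" for x
    unfolding v_def u cinner_scaleR_right Sdef cinner_scale_mat cinner_add_mat cinner_mat1
    by (simp add: divide_inverse)
  have fe: "cinner f e = 0" using ef cinner_cnj[of f e] by simp
  have ev: "cinner e v = of_real (nu / t * (a + dl))" by (simp add: cxv Ae ee)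
  have fv: "cinner f v = of_real (nu / t) * cnj b" by (simp add: cxv Afe fe)
  have ve: "cinner v e = of_real (nu / t * (a + dl))" using ev cinner_cnj[of v e] by simp
  have vf: "cinner v f = of_real (nu / t) * b" using fv cinner_cnj[of v f] by simp
  have nt: "(nu / t)^2 = nu^2 / s" using tt by (simp add: power_divide power2_eq_square)
  have bb: "b * cnj b = of_real ((cmod b)^2)" using complex_norm_square[of b] by simp
  have E1: "cinner e (A' *v e) = of_real (a - nu^2 * (a + dl)^2 / s)"
  proof -
    have "cinner e (A' *v e) = of_real a - of_real ((nu / t * (a + dl))^2)"
      by (simp add: cin Ae ev ve power2_eq_square)
    also have "\<dots> = of_real (a - nu^2 / s * (a + dl)^2)"
      unfolding power_mult_distrib nt by simp
    also have "\<dots> = of_real (a - nu^2 * (a + dl)^2 / s)" by simp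
    finally show ?thesis .
  qed
  show e1: "Re (cinner e (A' *v e)) = a - nu^2 * (a + dl)^2 / s" by (simp add: E1)
  show e2: "cinner e (A' *v f) = of_real (1 - nu^2 * (a + dl) / s) * b"
  proof -
    have "cinner e (A' *v f) = b - of_real ((nu / t)^2 * (a + dl)) * b"
      using t0 by (simp add: cin b_def[symmetric] ev vf power2_eq_square field_simps)
    also have "\<dots> = of_real (1 - (nu / t)^2 * (a + dl)) * b"
      by (simp add: algebra_simps)
    also have "\<dots> = of_real (1 - nu^2 * (a + dl) / s) * b"
      unfolding nt by simp
    finally show ?thesis .
  qed
  have xle: "nu^2 * (a + dl) / s \<le> 1"
  proof -
    have "a + dl \<le> s" using d0 dlp by (simp add: s_def)
    moreover have "nu^2 \<le> 1" using nu0 nu1 by (simp add: power_le_one)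
    ultimately have "nu^2 * (a + dl) \<le> 1 * s" using a0 dlp by (intro mult_mono) auto
    then show ?thesis using sp by simp
  qed
  show e3: "cmod (cinner e (A' *v f)) = (1 - nu^2 * (a + dl) / s) * cmod b"
    unfolding e2 norm_mult norm_of_real using xle by simp
  have E4: "cinner f (A' *v f) = of_real (d - nu^2 * (cmod b)^2 / s)"
  proof -
    have "cinner f (A' *v f) = of_real d - of_real ((nu / t)^2) * (b * cnj b)"
      by (simp add: cin Af fv vf power2_eq_square algebra_simps)
    also have "\<dots> = of_real (d - nu^2 / s * (cmod b)^2)"
      unfolding bb nt by simp
    also have "\<dots> = of_real (d - nu^2 * (cmod b)^2 / s)" by simp
    finally show ?thesis .
  qed
  show e4: "Re (cinner f (A' *v f)) = d - nu^2 * (cmod b)^2 / s" by (simp add: E4)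
  have B: "(cmod b)^2 = a * d - dl * dl" using dd by simp
  have det': "Re (cinner e (A' *v e)) * Re (cinner f (A' *v f)) - (cmod (cinner e (A' *v f)))^2
          = (1 - nu^2) * (a * d - (cmod b)^2)"
  proof -
    have "Re (cinner e (A' *v e)) * Re (cinner f (A' *v f)) - (cmod (cinner e (A' *v f)))^2
       = (a - nu^2 * (a + dl)^2 / s) * (d - nu^2 * (cmod b)^2 / s) - (1 - nu^2 * (a + dl) / s)^2 * (cmod b)^2"
      by (simp add: e1 e3 e4 power_mult_distrib)
    also have "\<dots> = (1 - nu^2) * (a * d - (cmod b)^2)"
      by (rule step_alg[OF B s_def[THEN meta_eq_to_obj_eq] sp])
    finally show ?thesis .
  qed
  then show "Re (cinner e (A' *v e)) * Re (cinner f (A' *v f)) - (cmod (cinner e (A' *v f)))^2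
          = (1 - nu^2) * (a * d - (cmod b)^2)" .
  have hA': "herm A'"
  proof -
    obtain p r q where he: "A$1$1 = of_real p" "A$2$2 = of_real r" "A$1$2 = q" "A$2$1 = cnj q"
      using herm_obtain[OF h] by blast
    show ?thesis by (rule hermI) (simp_all add: A'eq he)
  qed
  note hf' = herm_ef[OF hA' ee ff ef]
  have n2: "nu^2 \<le> 1" using nu0 nu1 by (simp add: power_le_one)
  have ap: "0 \<le> a - nu^2 * (a + dl)^2 / s"
  proof -
    have "a * s - (a + dl)^2 = (cmod b)^2" using dd unfolding s_def
      by (simp add: power2_eq_square algebra_simps)
    then have "(a + dl)^2 \<le> a * s" by (metis diff_ge_0_iff_ge zero_le_power2)
    then have "(a + dl)^2 / s \<le> a" using sp by (simp add: divide_le_eq)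
    then have "nu^2 * ((a + dl)^2 / s) \<le> 1 * a" using n2 a0 sp by (intro mult_mono) auto
    then show ?thesis by simp
  qed
  have dp: "0 \<le> d - nu^2 * (cmod b)^2 / s"
  proof -
    have b1: "(cmod b)^2 \<le> a * d" using dd zero_le_square[of dl] by linarith
    have "d * s = a * d + (d * d + 2 * (d * dl))" unfolding s_def by (simp add: algebra_simps)
    moreover have "0 \<le> d * d" "0 \<le> d * dl" using d0 dlp by simp_all
    ultimately have "(cmod b)^2 \<le> d * s" using b1 by linarith
    then have "(cmod b)^2 / s \<le> d" using sp by (simp add: divide_le_eq mult.commute)
    then have "nu^2 * ((cmod b)^2 / s) \<le> 1 * d" using n2 d0 sp by (intro mult_mono) auto
    then show ?thesis by simp
  qed
  show "positive_op A'"
  proof (rule pos_from_trdet[OF hA'])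
    show "0 \<le> Re (A'$1$1) + Re (A'$2$2)" unfolding hf'(4) e1 e4 using ap dp by simp
    have "0 \<le> (1 - nu^2) * (a * d - (cmod b)^2)" using n2 Dp' by simp
    then show "(cmod (A'$1$2))^2 \<le> Re (A'$1$1) * Re (A'$2$2)" using hf'(5) det' by simp
  qed
qed

theorem theorem4p1:
  fixes u f :: cvec and T :: "nat \<Rightarrow> cop"
  assumes u_pos: "0 < norm u" and u_lt1: "norm u < 1"
    and T0: "strictly_positive_op (T 0)"
    and T_rec: "\<And>n. T (Suc n) = op_sqrt (T n) ** ((mat 1 :: cop) - ketbra u u) ** op_sqrt (T n)"
    and f_unit: "norm f = 1"
    and f_perp: "cinner (scaleR (1 / norm u) u) f = 0"
  shows "(cinner (scaleR (1 / norm u) u) (T 0 *v f) = 0 \<longrightarrow>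
           (T \<longlonglongrightarrow> op_scale (cinner f (T 0 *v f)) (ketbra f f)))
       \<and> (cinner (scaleR (1 / norm u) u) (T 0 *v f) \<noteq> 0 \<longrightarrow> (T \<longlonglongrightarrow> 0))"
proof -
  define nu where "nu = norm u"
  define e where "e = (1 / norm u) *\<^sub>R u"
  have nu0: "0 < nu" and nu1: "nu < 1" using u_pos u_lt1 by (simp_all add: nu_def)
  have ne: "norm e = 1" using u_pos by (simp add: e_def)
  have ee: "cinner e e = 1" by (simp add: cinner_self ne)
  have ff: "cinner f f = 1" by (simp add: cinner_self f_unit)
  have ef: "cinner e f = 0" unfolding e_def by (rule f_perp)
  have uE: "u = nu *\<^sub>R e" using u_pos by (simp add: e_def nu_def)
  define ca where "ca n = Re (cinner e (T n *v e))" for n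
  define cb where "cb n = cinner e (T n *v f)" for n
  define cd where "cd n = Re (cinner f (T n *v f))" for n
  define bb where "bb n = cmod (cb n)" for n
  define dl where "dl n = sqrt (ca n * cd n - (bb n)^2)" for n
  define s where "s n = ca n + cd n + 2 * dl n" for n
  have pos0: "positive_op (T 0)" using T0 strictly_positive_op_def by blast
  have D0: "0 < ca 0 * cd 0 - (bb 0)^2"
    using strict_det[OF T0] herm_ef(5)[OF pos_herm[OF pos0] ee ff ef]
    by (simp add: ca_def cd_def bb_def cb_def)
  have inv: "positive_op (T n) \<and> 0 < ca n * cd n - (bb n)^2" for n
  proof (induction n)
    case 0 then show ?case using pos0 D0 by simp
  next
    case (Suc n)
    have p: "positive_op (T n)" and Dp: "0 < Re (cinner e (T n *v e)) * Re (cinner f (T n *v f)) - (cmod (cinner e (T n *v f)))^2"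
      using Suc by (simp_all add: ca_def cd_def bb_def cb_def)
    note ms = mstep[OF ee ff ef uE nu0 nu1 p Dp]
    have "positive_op (T (Suc n))" using ms(5) by (simp add: T_rec)
    moreover have "0 < ca (Suc n) * cd (Suc n) - (bb (Suc n))^2"
    proof -
      have "ca (Suc n) * cd (Suc n) - (bb (Suc n))^2 = (1 - nu^2) * (ca n * cd n - (bb n)^2)"
        using ms(6) by (simp add: T_rec ca_def cd_def bb_def cb_def)
      moreover have "0 < 1 - nu^2" using nu0 nu1 by (simp add: power_less_one_iff abs_of_pos)
      ultimately show ?thesis using Suc by simp
    qed
    ultimately show ?case ..
  qed
  have recs: "ca (Suc n) = ca n - nu^2 * (ca n + dl n)^2 / s n
           \<and> bb (Suc n) = (1 - nu^2 * (ca n + dl n) / s n) * bb n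
           \<and> cd (Suc n) = cd n - nu^2 * (bb n)^2 / s n" for n
  proof -
    have p: "positive_op (T n)" and Dp: "0 < Re (cinner e (T n *v e)) * Re (cinner f (T n *v f)) - (cmod (cinner e (T n *v f)))^2"
      using inv[of n] by (simp_all add: ca_def cd_def bb_def cb_def)
    note ms = mstep[OF ee ff ef uE nu0 nu1 p Dp]
    show ?thesis
      using ms(1) ms(3) ms(4)
      by (simp add: T_rec[of n, symmetric] ca_def cd_def bb_def cb_def dl_def s_def)
  qed
  have a0: "0 \<le> ca n" for n using inv[of n] unfolding positive_op_def ca_def by blast
  have d0: "0 \<le> cd n" for n using inv[of n] unfolding positive_op_def cd_def by blast
  have t0: "0 < nu^2" using nu0 by simp
  have t1: "nu^2 < 1" using nu0 nu1 by (simp add: power_less_one_iff abs_of_pos)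
  note sm = scalar_main[where a=ca and d=cd and bb=bb and dl=dl and s=s and t="nu^2",
      OF t0 t1 a0 d0 _ D0 dl_def s_def]
  have bb0: "0 \<le> bb n" for n by (simp add: bb_def)
  have ra: "\<And>n. ca (Suc n) = ca n - nu^2 * (ca n + dl n)^2 / s n" using recs by blast
  have rb: "\<And>n. bb (Suc n) = (1 - nu^2 * (ca n + dl n) / s n) * bb n" using recs by blast
  have rd: "\<And>n. cd (Suc n) = cd n - nu^2 * (bb n)^2 / s n" using recs by blast
  note sm' = sm[OF bb0 ra rb rd]
  have cal: "(\<lambda>n. complex_of_real (ca n)) \<longlonglongrightarrow> 0"
    using tendsto_of_real[OF sm'(1), where 'a=complex] by simp
  have cbl: "cb \<longlonglongrightarrow> 0"
    using sm'(2) unfolding bb_def by (simp add: tendsto_norm_zero_iff)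
  have ent: "T n $ i $ j = of_real (ca n) * (e$i * cnj (e$j)) + cb n * (e$i * cnj (f$j))
       + cnj (cb n) * (f$i * cnj (e$j)) + of_real (cd n) * (f$i * cnj (f$j))" for n i j
  proof -
    have h: "herm (T n)" using inv[of n] pos_herm by blast
    note hf = herm_ef[OF h ee ff ef]
    show ?thesis using ortho_entries[OF ee ff ef, of "T n" i j]
      by (simp add: ca_def cd_def cb_def hf(3) flip: hf(1) hf(2))
  qed
  have cb0: "cinner (scaleR (1 / norm u) u) (T 0 *v f) = cb 0" by (simp add: cb_def e_def)
  show ?thesis
  proof (intro conjI impI)
    assume "cinner (scaleR (1 / norm u) u) (T 0 *v f) = 0"
    then have "bb 0 = 0" by (simp add: cb0 bb_def)
    then have cdc: "cd n = cd 0" for n using sm'(3) by blast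
    have L: "op_scale (cinner f (T 0 *v f)) (ketbra f f) $ i $ j = of_real (cd 0) * (f$i * cnj (f$j))" for i j
    proof -
      have h: "herm (T 0)" using pos0 pos_herm by blast
      show ?thesis using herm_ef(2)[OF h ee ff ef] by (simp add: cd_def)
    qed
    show "T \<longlonglongrightarrow> op_scale (cinner f (T 0 *v f)) (ketbra f f)"
    proof (rule vec_tendstoI, rule vec_tendstoI)
      fix i j
      have cf: "(\<lambda>n. complex_of_real (cd n)) = (\<lambda>n. complex_of_real (cd 0))"
        by (rule ext, subst cdc, rule refl)
      have cdl: "(\<lambda>n. complex_of_real (cd n)) \<longlonglongrightarrow> of_real (cd 0)"
        unfolding cf by (rule tendsto_const)
      have "(\<lambda>n. of_real (ca n) * (e$i * cnj (e$j)) + cb n * (e$i * cnj (f$j))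
          + cnj (cb n) * (f$i * cnj (e$j)) + of_real (cd n) * (f$i * cnj (f$j)))
          \<longlonglongrightarrow> 0 * (e$i * cnj (e$j)) + 0 * (e$i * cnj (f$j))
          + cnj 0 * (f$i * cnj (e$j)) + of_real (cd 0) * (f$i * cnj (f$j))"
        by (intro tendsto_intros cal cbl cdl)
      then show "(\<lambda>n. T n $ i $ j) \<longlonglongrightarrow> op_scale (cinner f (T 0 *v f)) (ketbra f f) $ i $ j"
        unfolding L ent by simp
    qed
  next
    assume "cinner (scaleR (1 / norm u) u) (T 0 *v f) \<noteq> 0"
    then have "bb 0 \<noteq> 0" by (simp add: cb0 bb_def)
    then have cdl: "cd \<longlonglongrightarrow> 0" using sm'(4) by blast
    then have cdl': "(\<lambda>n. complex_of_real (cd n)) \<longlonglongrightarrow> 0"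
      using tendsto_of_real[OF cdl, where 'a=complex] by simp
    show "T \<longlonglongrightarrow> 0"
    proof (rule vec_tendstoI, rule vec_tendstoI)
      fix i j
      have "(\<lambda>n. of_real (ca n) * (e$i * cnj (e$j)) + cb n * (e$i * cnj (f$j))
          + cnj (cb n) * (f$i * cnj (e$j)) + of_real (cd n) * (f$i * cnj (f$j)))
          \<longlonglongrightarrow> 0 * (e$i * cnj (e$j)) + 0 * (e$i * cnj (f$j))
          + cnj 0 * (f$i * cnj (e$j)) + 0 * (f$i * cnj (f$j))"
        by (intro tendsto_intros cal cbl cdl')
      then show "(\<lambda>n. T n $ i $ j) \<longlonglongrightarrow> (0::cop) $ i $ j"
        unfolding ent by simp
    qed
  qed
qed

end
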